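(* Let $\mathcal{M} = (\Sigma_\Box, Q, q_{in}, q_{fin}, \delta)$ be a Turing machine. There exist a closed term $\mathtt{trans} \in \Lambda_{\mathtt{det}}$ and a constant $c$ (depending only on $\mathcal{M}$) such that for every value $k$ and every configuration $C$: (1) if a final configuration $D$ is reachable from $C$ in $n$ transition steps of $\mathcal{M}$, then $\mathtt{trans}\;k\;\ulcorner C\urcorner \to_{\mathtt{det}}^{m} k\;\ulcorner D\urcorner$ for some $m \le c\,(n+1)$; (2) if no final configuration is reachable from $C$, then $\mathtt{trans}\;k\;\ulcorner C\urcorner$ diverges, i.e. it has an infinite $\to_{\mathtt{det}}$-reduction sequence.
   Context: The deterministic $\lambda$-calculus $\Lambda_{\mathtt{det}}$ has terms and values given by the grammar: terms $t ::= v \mid t\,v$; values $v ::= \lambda x.t \mid x$. Evaluation contexts are $E ::= [\cdot] \mid E\,v$ (they never enter abstractions). The reduction $\to_{\mathtt{det}}$ is the closure under evaluation contexts of $(\lambda x.t)\,s \mapsto t\{x:=s\}$; $t \to_{\mathtt{det}}^n s$ means $t$ reduces to $s$ in exactly $n$ steps. Application associates to the left. Scott encoding: for a finite totally ordered alphabet $\Gamma = \{c_1,\dots,c_m\}$, $\ulcorner c_i\urcorner^{\Gamma} := \lambda x_1.\cdots.\lambda x_m.x_i$, $\ulcorner \varepsilon\urcorner^{\Gamma^*} := \lambda x_1.\cdots.\lambda x_m.\lambda y.y$ and $\ulcorner c_i r\urcorner^{\Gamma^*} := \lambda x_1.\cdots.\lambda x_m.\lambda y.\,x_i\,\ulcorner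 r\urcorner^{\Gamma^*}$. Turing machines: $\mathcal{M} = (\Sigma_\Box, Q, q_{in}, q_{fin}, \delta)$ where $\Sigma = \{a_1,\dots,a_n\}$ is a finite alphabet, $\Sigma_\Box = \Sigma\cup\{\Box\}$ with blank symbol $\Box\notin\Sigma$ ordered last, $Q=\{q_1,\dots,q_m\}$ is a finite ordered set of states (treated as an alphabet for encoding), $q_{in},q_{fin}\in Q$, and $\delta : Q\times\Sigma_\Box \rightharpoonup Q\times\Sigma_\Box\times\{\leftarrow,\rightarrow,\downarrow\}$ is defined exactly on pairs with first component $\neq q_{fin}$. A configuration is $(s,a,r,q)\in\Sigma_\Box^*\times\Sigma_\Box\times\Sigma_\Box^*\times Q$ (tape left of the head, head cell, tape right of the head, state); it is final if $q = q_{fin}$. The transition relation $\to_{\mathcal{M}}$: if $\delta(q,a) = (q',b,\downarrow)$ then $(s,a,r,q)\to_{\mathcal{M}}(s,b,r,q')$; if $\delta(q,a)=(q',b,\leftarrow)$ then $(s'c,a,r,q)\to_{\mathcal{M}}(s',c,br,q')$ and $(\varepsilon,a,r,q)\to_{\mathcal{M}}(\varepsilon,\Box,br,q')$; if $\delta(q,a)=(q',b,\rightarrow)$ then $(s,a,cr',q)\to_{\mathcal{M}}(sb,c,r',q')$ and $(s,a,\varepsilon,q)\to_{\mathcal{M}}(sb,\Box,\varepsilon,q')$. Encoding of configurations: $\ulcorner (s,a,r,q)\urcorner := \lambda x.\, x\,\ulcorner s^R\urcorner^{\Sigma_\Box^*}\,\ulcorner a\urcorner^{\Sigma_\Box}\,\ulcorner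 r\urcorner^{\Sigma_\Box^*}\,\ulcorner q\urcorner^{Q}$, where $s^R$ is the reverse of $s$. *)

theory Defs
  imports Main
begin

datatype trm = Var nat | Lam trm | App trm trm

fun is_val :: "trm \<Rightarrow> bool" where
  "is_val (Var _) = True"
| "is_val (Lam _) = True"
| "is_val (App _ _) = False"

fun det_term :: "trm \<Rightarrow> bool" where
  "det_term (Var _) = True"
| "det_term (Lam t) = det_term t"
| "det_term (App t u) = (det_term t \<and> is_val u \<and> det_term u)"

fun closed_at :: "nat \<Rightarrow> trm \<Rightarrow> bool" where
  "closed_at k (Var i) = (i < k)"
| "closed_at k (Lam t) = closed_at (Suc k) t"
| "closed_at k (App t u) = (closed_at k t \<and> closed_at k u)"

definition closed :: "trm \<Rightarrow> bool" where
  "closed t = closed_at 0 t"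

fun lift :: "trm \<Rightarrow> nat \<Rightarrow> trm" where
  "lift (Var i) k = (if i < k then Var i else Var (Suc i))"
| "lift (Lam t) k = Lam (lift t (Suc k))"
| "lift (App t u) k = App (lift t k) (lift u k)"

fun subst :: "trm \<Rightarrow> nat \<Rightarrow> trm \<Rightarrow> trm" where
  "subst (Var i) k s = (if i < k then Var i else if i = k then s else Var (i - 1))"
| "subst (Lam t) k s = Lam (subst t (Suc k) (lift s 0))"
| "subst (App t u) k s = App (subst t k s) (subst u k s)"

inductive det_step :: "trm \<Rightarrow> trm \<Rightarrow> bool" where
  beta: "det_step (App (Lam t) s) (subst t 0 s)"
| ctx:  "det_step t t' \<Longrightarrow> det_step (App t v) (App t' v)"

definition diverges :: "trm \<Rightarrow> bool" where
  "diverges t \<longleftrightarrow> (\<exists>f. f 0 = t \<and> (\<forall>i. det_step (f i) (f (Suc i))))"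

text \<open>Alphabet {c_0,...,c_(m-1)} (0-indexed, ordered by index).
  Symbol c_i is \<lambda>x_1...x_m. x_(i+1).\<close>
definition lams :: "nat \<Rightarrow> trm \<Rightarrow> trm" where
  "lams m t = (Lam ^^ m) t"

definition enc_sym :: "nat \<Rightarrow> nat \<Rightarrow> trm" where
  "enc_sym m i = lams m (Var (m - 1 - i))"

fun enc_str :: "nat \<Rightarrow> nat list \<Rightarrow> trm" where
  "enc_str m [] = lams (Suc m) (Var 0)"
| "enc_str m (i # r) = lams (Suc m) (App (Var (m - i)) (enc_str m r))"

datatype dir = L | R | N

text \<open>Sigma = {0..<nsym}, blank = nsym (ordered last), Q = {0..<nst}.\<close>
record tm =
  nsym :: nat
  nst :: nat
  q_in :: nat
  q_fin :: nat
  delta :: "nat \<Rightarrow> nat \<Rightarrow> (nat \<times> nat \<times> dir) option"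

definition blank :: "tm \<Rightarrow> nat" where
  "blank M = nsym M"

definition wf_tm :: "tm \<Rightarrow> bool" where
  "wf_tm M \<longleftrightarrow> q_in M < nst M \<and> q_fin M < nst M \<and>
     (\<forall>q a. delta M q a \<noteq> None \<longleftrightarrow> (q < nst M \<and> a \<le> nsym M \<and> q \<noteq> q_fin M)) \<and>
     (\<forall>q a q' b d. delta M q a = Some (q', b, d) \<longrightarrow> q' < nst M \<and> b \<le> nsym M)"

type_synonym config = "nat list \<times> nat \<times> nat list \<times> nat"

definition valid_config :: "tm \<Rightarrow> config \<Rightarrow> bool" where
  "valid_config M C = (case C of (s, a, r, q) \<Rightarrow>
     (\<forall>x\<in>set s. x \<le> nsym M) \<and> a \<le> nsym M \<and> (\<forall>x\<in>set r. x \<le> nsym M) \<and> q < nst M)"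

definition final :: "tm \<Rightarrow> config \<Rightarrow> bool" where
  "final M C = (case C of (s, a, r, q) \<Rightarrow> q = q_fin M)"

inductive tm_step :: "tm \<Rightarrow> config \<Rightarrow> config \<Rightarrow> bool" for M where
  stay: "delta M q a = Some (q', b, N) \<Longrightarrow> tm_step M (s, a, r, q) (s, b, r, q')"
| left: "delta M q a = Some (q', b, L) \<Longrightarrow> tm_step M (s' @ [c], a, r, q) (s', c, b # r, q')"
| left_end: "delta M q a = Some (q', b, L) \<Longrightarrow> tm_step M ([], a, r, q) ([], blank M, b # r, q')"
| right: "delta M q a = Some (q', b, R) \<Longrightarrow> tm_step M (s, a, c # r', q) (s @ [b], c, r', q')"
| right_end: "delta M q a = Some (q', b, R) \<Longrightarrow> tm_step M (s, a, [], q) (s @ [b], blank M, [], q')"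

text \<open>Encoding of a configuration: \<lambda>x. x <s^R> <a> <r> <q>.\<close>
definition enc_config :: "tm \<Rightarrow> config \<Rightarrow> trm" where
  "enc_config M C = (case C of (s, a, r, q) \<Rightarrow>
     Lam (App (App (App (App (Var 0) (enc_str (Suc (nsym M)) (rev s)))
        (enc_sym (Suc (nsym M)) a)) (enc_str (Suc (nsym M)) r)) (enc_sym (nst M) q)))"

end

theory Submission
  imports Defs
begin


definition apps :: "trm \<Rightarrow> trm list \<Rightarrow> trm" where "apps t us = foldl App t us"

lemma apps_Nil[simp]: "apps t [] = t" by (simp add: apps_def)
lemma apps_Cons: "apps t (u # us) = apps (App t u) us" by (simp add: apps_def)
lemma apps_append: "apps t (xs @ ys) = apps (apps t xs) ys" by (simp add: apps_def)
lemma apps_snoc: "apps t (xs @ [y]) = App (apps t xs) y" by (simp add: apps_def)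

lemma lams_0[simp]: "lams 0 t = t" by (simp add: lams_def)
lemma lams_Suc: "lams (Suc n) t = Lam (lams n t)" by (simp add: lams_def)

lemma closed_mono: "closed_at d t \<Longrightarrow> d \<le> e \<Longrightarrow> closed_at e t"
  by (induction t arbitrary: d e) fastforce+

lemma subst_closed: "closed_at d t \<Longrightarrow> d \<le> e \<Longrightarrow> subst t e s = t"
  by (induction t arbitrary: d e s) fastforce+

lemma lift_closed: "closed_at d t \<Longrightarrow> d \<le> e \<Longrightarrow> lift t e = t"
  by (induction t arbitrary: d e) fastforce+

lemma subst_lift: "subst (lift t d) d s = t"
  by (induction t arbitrary: d s) auto

fun sb :: "trm list \<Rightarrow> nat \<Rightarrow> trm \<Rightarrow> trm" where
  "sb es d (Var i) = (if i < d then Var i else if i - d < length es then es ! (i - d) else Var (i - length es))"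
| "sb es d (Lam t) = Lam (sb es (Suc d) t)"
| "sb es d (App t u) = App (sb es d t) (sb es d u)"

lemma sb_Nil: "sb [] d t = t"
  by (induction t arbitrary: d) auto

lemma sb_closed0: "closed_at d t \<Longrightarrow> d \<le> e \<Longrightarrow> sb es e t = t"
  by (induction t arbitrary: d e) fastforce+

lemma sb_closed: "closed_at 0 t \<Longrightarrow> sb es e t = t"
  using sb_closed0 by blast

lemma sb_subst:
  assumes "\<forall>e\<in>set es. closed_at 0 e" "closed_at 0 v"
  shows "subst (sb es (Suc d) t) d v = sb (v # es) d t"
  using assms
proof (induction t arbitrary: d v)
  case (Var i)
  show ?case
  proof (cases "i < d")
    case True then show ?thesis by simp
  next
    case False
    show ?thesis
    proof (cases "i = d")
      case True then show ?thesis by simp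
    next
      case ne: False
      with False have gt: "i > d" by simp
      show ?thesis
      proof (cases "i - Suc d < length es")
        case True
        have "closed_at 0 (es ! (i - Suc d))" using Var.prems True by auto
        then have "subst (es ! (i - Suc d)) d v = es ! (i - Suc d)"
          using subst_closed by blast
        moreover have "(v # es) ! (i - d) = es ! (i - Suc d)"
          using gt by (simp add: Suc_diff_Suc)
        moreover have "i - d < Suc (length es)" using True gt by linarith
        ultimately show ?thesis using gt True by simp
      next
        case F: False
        then show ?thesis using gt by auto
      qed
    qed
  qed
next
  case (Lam t)
  have "lift v 0 = v" using Lam.prems lift_closed by blast
  then show ?case using Lam by simp
next
  case (App t u) then show ?case by simp
qed

lemma subst_lams: "closed_at 0 v \<Longrightarrow> subst (lams n t) d v = lams n (subst t (d + n) v)"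
proof (induction n arbitrary: d)
  case 0 then show ?case by simp
next
  case (Suc n)
  have "lift v 0 = v" using Suc.prems lift_closed by blast
  then show ?case using Suc by (simp add: lams_Suc)
qed

lemma sb_lams[simp]: "sb es d (lams n t) = lams n (sb es (d + n) t)"
  by (induction n arbitrary: d) (auto simp: lams_Suc)

lemma sb_apps[simp]: "sb es d (apps t us) = apps (sb es d t) (map (sb es d) us)"
  by (induction us arbitrary: t) (auto simp: apps_Cons)

lemma one_I: "det_step x y \<Longrightarrow> (det_step ^^ 1) x y"
  using relpowp_Suc_I2[OF _ relpowp_0_I, of det_step x y] by simp

lemma one_D: "(det_step ^^ 1) x y \<Longrightarrow> det_step x y"
  by (auto dest!: relpowp_Suc_D2)

lemma steps_app: "(det_step ^^ n) t t' \<Longrightarrow> (det_step ^^ n) (App t v) (App t' v)"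
proof (induction n arbitrary: t)
  case 0 then show ?case by simp
next
  case (Suc n)
  from Suc.prems obtain y where "det_step t y" "(det_step ^^ n) y t'" by (blast dest: relpowp_Suc_D2)
  then show ?case using Suc.IH by (blast intro: relpowp_Suc_I2 det_step.ctx)
qed

lemma steps_apps: "(det_step ^^ n) t t' \<Longrightarrow> (det_step ^^ n) (apps t us) (apps t' us)"
  by (induction us arbitrary: t t') (auto simp: apps_Cons steps_app)

lemma steps_trans: "(det_step ^^ a) x y \<Longrightarrow> (det_step ^^ b) y z \<Longrightarrow> (det_step ^^ (a + b)) x z"
  by (auto simp: relpowp_add)

lemma beta_gen:
  assumes "length vs = n" "\<forall>v\<in>set vs. closed_at 0 v" "\<forall>e\<in>set es. closed_at 0 e"
  shows "(det_step ^^ n) (apps (lams n (sb es n t)) vs) (sb (rev vs @ es) 0 t)"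
  using assms
proof (induction vs arbitrary: n es)
  case Nil then show ?case by simp
next
  case (Cons v vs)
  then obtain n' where n: "n = Suc n'" by auto
  have cv: "closed_at 0 v" using Cons.prems by simp
  have "det_step (App (lams n (sb es n t)) v) (lams n' (sb (v # es) n' t))"
  proof -
    have "det_step (App (Lam (lams n' (sb es (Suc n') t))) v) (subst (lams n' (sb es (Suc n') t)) 0 v)"
      by (rule det_step.beta)
    also have "subst (lams n' (sb es (Suc n') t)) 0 v = lams n' (sb (v # es) n' t)"
      using subst_lams[OF cv] sb_subst[of es v n' t] Cons.prems by simp
    finally show ?thesis by (simp add: n lams_Suc)
  qed
  then have "(det_step ^^ 1) (App (lams n (sb es n t)) v) (lams n' (sb (v # es) n' t))"
    by (rule one_I)
  then have "(det_step ^^ 1) (apps (App (lams n (sb es n t)) v) vs) (apps (lams n' (sb (v # es) n' t)) vs)"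
    by (rule steps_apps)
  then have 1: "det_step (apps (lams n (sb es n t)) (v # vs)) (apps (lams n' (sb (v # es) n' t)) vs)"
    unfolding apps_Cons by (rule one_D)
  have 2: "(det_step ^^ n') (apps (lams n' (sb (v # es) n' t)) vs) (sb (rev vs @ v # es) 0 t)"
    using Cons.IH[of n' "v # es"] Cons.prems n by simp
  show ?case using relpowp_Suc_I2[OF 1 2] n by simp
qed

lemma beta_n:
  assumes "length vs = n" "\<forall>v\<in>set vs. closed_at 0 v"
  shows "(det_step ^^ n) (apps (lams n t) (vs @ ys)) (apps (sb (rev vs) 0 t) ys)"
proof -
  have "(det_step ^^ n) (apps (lams n (sb [] n t)) vs) (sb (rev vs @ []) 0 t)"
    using beta_gen[OF assms, of "[]"] by simp
  then show ?thesis unfolding apps_append using steps_apps sb_Nil by simp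
qed

lemma closed_apps[simp]: "closed_at d (apps t us) = (closed_at d t \<and> (\<forall>u\<in>set us. closed_at d u))"
  by (induction us arbitrary: t) (auto simp: apps_Cons)

lemma closed_lams[simp]: "closed_at d (lams n t) = closed_at (d + n) t"
  by (induction n arbitrary: d) (auto simp: lams_Suc)

lemma det_apps[simp]: "det_term (apps t us) = (det_term t \<and> (\<forall>u\<in>set us. is_val u \<and> det_term u))"
  by (induction us arbitrary: t) (auto simp: apps_Cons)

lemma det_lams[simp]: "det_term (lams n t) = det_term t"
  by (induction n) (auto simp: lams_Suc)

lemma val_lams: "0 < n \<Longrightarrow> is_val (lams n t)"
  by (cases n) (auto simp: lams_Suc)

lemma disp_sym:
  assumes "i < n" "length bs = n" "\<forall>b\<in>set bs. closed_at 0 b"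
  shows "(det_step ^^ n) (apps (enc_sym n i) (bs @ ys)) (apps (bs ! i) ys)"
proof -
  have "sb (rev bs) 0 (Var (n - 1 - i)) = bs ! i"
    using assms by (simp add: rev_nth)
  then show ?thesis using beta_n[OF assms(2,3), of "Var (n - 1 - i)" ys]
    by (simp add: enc_sym_def)
qed

lemma closed_enc_str[simp]: "closed_at d (enc_str m xs)"
  by (induction xs arbitrary: d) auto

lemma closed_enc_sym[simp]: "0 < n \<Longrightarrow> closed_at d (enc_sym n i)"
  by (simp add: enc_sym_def)

lemma disp_cons:
  assumes "c < m" "length bs = m" "\<forall>b\<in>set bs. closed_at 0 b" "closed_at 0 e"
  shows "(det_step ^^ Suc m) (apps (enc_str m (c # xs)) (bs @ e # ys)) (apps (bs ! c) (enc_str m xs # ys))"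
proof -
  have l: "length (bs @ [e]) = Suc m" "\<forall>b\<in>set (bs @ [e]). closed_at 0 b" using assms by auto
  have mc: "m - c = Suc (m - Suc c)" using assms by simp
  have "(e # rev bs) ! (m - c) = rev bs ! (m - Suc c)"
    unfolding mc by simp
  also have "\<dots> = bs ! c"
    using assms rev_nth[of "m - Suc c" bs] by simp
  finally have nth: "(e # rev bs) ! (m - c) = bs ! c" .
  then have "sb (rev (bs @ [e])) 0 (App (Var (m - c)) (enc_str m xs)) = App (bs ! c) (enc_str m xs)"
    using assms nth by (simp add: sb_closed less_Suc_eq_le)
  moreover have "enc_str m (c # xs) = lams (Suc m) (App (Var (m - c)) (enc_str m xs))" by simp
  ultimately show ?thesis using beta_n[OF l, of "App (Var (m - c)) (enc_str m xs)" ys]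
    by (simp add: apps_Cons apps_append)
qed

lemma disp_nil:
  assumes "length bs = m" "\<forall>b\<in>set bs. closed_at 0 b" "closed_at 0 e"
  shows "(det_step ^^ Suc m) (apps (enc_str m []) (bs @ e # ys)) (apps e ys)"
proof -
  have l: "length (bs @ [e]) = Suc m" "\<forall>b\<in>set (bs @ [e]). closed_at 0 b" using assms by auto
  show ?thesis using beta_n[OF l, of "Var 0" ys] by simp
qed



abbreviation AA :: "tm \<Rightarrow> nat" where "AA M \<equiv> Suc (nsym M)"
abbreviation encS :: "tm \<Rightarrow> nat \<Rightarrow> trm" where "encS M x \<equiv> enc_sym (AA M) x"
abbreviation encL :: "tm \<Rightarrow> nat list \<Rightarrow> trm" where "encL M xs \<equiv> enc_str (AA M) xs"
abbreviation encQ :: "tm \<Rightarrow> nat \<Rightarrow> trm" where "encQ M q \<equiv> enc_sym (nst M) q"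

definition consv :: "tm \<Rightarrow> nat \<Rightarrow> nat \<Rightarrow> trm" where
  "consv M b j = lams (Suc (AA M)) (App (Var (AA M - b)) (Var (j + Suc (AA M))))"

definition HN :: "tm \<Rightarrow> nat \<Rightarrow> nat \<Rightarrow> trm" where
  "HN M q' b = lams 3 (apps (Var 0) [Var 0, Lam (apps (Var 0) [Var 3, encS M b, Var 2, encQ M q'])])"
definition RC :: "tm \<Rightarrow> nat \<Rightarrow> nat \<Rightarrow> nat \<Rightarrow> trm" where
  "RC M q' b c = lams 3 (apps (Var 0) [Var 0, Lam (apps (Var 0) [consv M b 2, encS M c, Var 3, encQ M q'])])"
definition RE :: "tm \<Rightarrow> nat \<Rightarrow> nat \<Rightarrow> trm" where
  "RE M q' b = lams 2 (apps (Var 0) [Var 0, Lam (apps (Var 0) [consv M b 2, encS M (nsym M), encL M [], encQ M q'])])"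
definition RCs :: "tm \<Rightarrow> nat \<Rightarrow> nat \<Rightarrow> trm list" where
  "RCs M q' b = map (RC M q' b) [0..<AA M]"
definition HR :: "tm \<Rightarrow> nat \<Rightarrow> nat \<Rightarrow> trm" where
  "HR M q' b = lams 3 (apps (Var 1) (RCs M q' b @ [RE M q' b, Var 2, Var 0]))"
definition LC :: "tm \<Rightarrow> nat \<Rightarrow> nat \<Rightarrow> nat \<Rightarrow> trm" where
  "LC M q' b c = lams 3 (apps (Var 0) [Var 0, Lam (apps (Var 0) [Var 3, encS M c, consv M b 2, encQ M q'])])"
definition LE :: "tm \<Rightarrow> nat \<Rightarrow> nat \<Rightarrow> trm" where
  "LE M q' b = lams 2 (apps (Var 0) [Var 0, Lam (apps (Var 0) [encL M [], encS M (nsym M), consv M b 2, encQ M q'])])"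
definition LCs :: "tm \<Rightarrow> nat \<Rightarrow> nat \<Rightarrow> trm list" where
  "LCs M q' b = map (LC M q' b) [0..<AA M]"
definition HL :: "tm \<Rightarrow> nat \<Rightarrow> nat \<Rightarrow> trm" where
  "HL M q' b = lams 3 (apps (Var 2) (LCs M q' b @ [LE M q' b, Var 1, Var 0]))"
definition Ht :: "tm \<Rightarrow> nat \<Rightarrow> nat \<Rightarrow> trm" where
  "Ht M q a = (case delta M q a of None \<Rightarrow> lams 3 (Var 0)
     | Some (q', b, d) \<Rightarrow> (case d of N \<Rightarrow> HN M q' b | R \<Rightarrow> HR M q' b | L \<Rightarrow> HL M q' b))"
definition Hs :: "tm \<Rightarrow> nat \<Rightarrow> trm list" where
  "Hs M q = map (Ht M q) [0..<AA M]"
definition Gfin :: "tm \<Rightarrow> trm" where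
  "Gfin M = lams 4 (Lam (App (Var 0) (Lam (apps (Var 0) [Var 5, Var 4, Var 3, encQ M (q_fin M)]))))"
definition Gt :: "tm \<Rightarrow> nat \<Rightarrow> trm" where
  "Gt M q = (if q = q_fin M then Gfin M else lams 4 (apps (Var 2) (Hs M q @ [Var 3, Var 1, Var 0])))"
definition Gs :: "tm \<Rightarrow> trm list" where
  "Gs M = map (Gt M) [0..<nst M]"
definition Ft :: "tm \<Rightarrow> trm" where
  "Ft M = lams 5 (apps (Var 1) (Gs M @ [Var 4, Var 3, Var 2, Var 0]))"
definition Wt :: "tm \<Rightarrow> trm" where
  "Wt M = lams 2 (apps (Var 0) [Ft M, Var 1])"
definition transT :: "tm \<Rightarrow> trm" where
  "transT M = Lam (Lam (App (App (App (Wt M) (Wt M)) (Var 0)) (Var 1)))"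

lemma cl_consv[simp]: "j + 1 \<le> d \<Longrightarrow> closed_at d (consv M b j)"
  by (simp add: consv_def)

lemma cl_HN[simp]: "0 < nst M \<Longrightarrow> closed_at d (HN M q' b)" by (rule closed_mono[of 0]) (simp_all add: HN_def)
lemma cl_RC[simp]: "0 < nst M \<Longrightarrow> closed_at d (RC M q' b c)" by (rule closed_mono[of 0]) (simp_all add: RC_def)
lemma cl_RE[simp]: "0 < nst M \<Longrightarrow> closed_at d (RE M q' b)" by (rule closed_mono[of 0]) (simp_all add: RE_def)
lemma cl_RCs[simp]: "0 < nst M \<Longrightarrow> \<forall>x\<in>set (RCs M q' b). closed_at d x" by (auto simp: RCs_def intro: closed_mono[of 0])
lemma cl_HR[simp]: "0 < nst M \<Longrightarrow> closed_at d (HR M q' b)" by (rule closed_mono[of 0]) (simp_all add: HR_def)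
lemma cl_LC[simp]: "0 < nst M \<Longrightarrow> closed_at d (LC M q' b c)" by (rule closed_mono[of 0]) (simp_all add: LC_def)
lemma cl_LE[simp]: "0 < nst M \<Longrightarrow> closed_at d (LE M q' b)" by (rule closed_mono[of 0]) (simp_all add: LE_def)
lemma cl_LCs[simp]: "0 < nst M \<Longrightarrow> \<forall>x\<in>set (LCs M q' b). closed_at d x" by (auto simp: LCs_def intro: closed_mono[of 0])
lemma cl_HL[simp]: "0 < nst M \<Longrightarrow> closed_at d (HL M q' b)" by (rule closed_mono[of 0]) (simp_all add: HL_def)
lemma cl_Ht[simp]: "0 < nst M \<Longrightarrow> closed_at d (Ht M q a)"
  by (auto simp: Ht_def split: option.split dir.split)
lemma cl_Hs[simp]: "0 < nst M \<Longrightarrow> \<forall>x\<in>set (Hs M q). closed_at d x" by (auto simp: Hs_def intro: closed_mono[of 0])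
lemma cl_Gfin[simp]: "0 < nst M \<Longrightarrow> closed_at d (Gfin M)" by (rule closed_mono[of 0]) (simp_all add: Gfin_def)
lemma cl_Gt[simp]: "0 < nst M \<Longrightarrow> closed_at d (Gt M q)" by (rule closed_mono[of 0]) (simp_all add: Gt_def)
lemma cl_Gs[simp]: "0 < nst M \<Longrightarrow> \<forall>x\<in>set (Gs M). closed_at d x" by (auto simp: Gs_def intro: closed_mono[of 0])
lemma cl_Ft[simp]: "0 < nst M \<Longrightarrow> closed_at d (Ft M)" by (rule closed_mono[of 0]) (simp_all add: Ft_def)
lemma cl_Wt[simp]: "0 < nst M \<Longrightarrow> closed_at d (Wt M)" by (rule closed_mono[of 0]) (simp_all add: Wt_def)

lemma sb_map_closed: "\<forall>x\<in>set xs. closed_at 0 x \<Longrightarrow> map (sb es d) xs = xs"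
  by (induction xs) (auto simp: sb_closed)

lemma len_RCs[simp]: "length (RCs M q' b) = AA M" by (simp add: RCs_def)
lemma len_LCs[simp]: "length (LCs M q' b) = AA M" by (simp add: LCs_def)
lemma len_Hs[simp]: "length (Hs M q) = AA M" by (simp add: Hs_def)
lemma len_Gs[simp]: "length (Gs M) = nst M" by (simp add: Gs_def)

lemma st_N:
  assumes "0 < nst M" "closed_at 0 sR" "closed_at 0 er"
  shows "(det_step ^^ 3) (apps (HN M q' b) [sR, er, Wt M])
           (apps (Wt M) [Wt M, Lam (apps (Var 0) [sR, encS M b, er, encQ M q'])])"
  using beta_n[of "[sR, er, Wt M]" 3 "apps (Var 0) [Var 0, Lam (apps (Var 0) [Var 3, encS M b, Var 2, encQ M q'])]" "[]"] assms
  by (simp add: HN_def sb_closed)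

lemma diff_lt_SS[simp]: "(n::nat) - b < Suc (Suc n)" by arith

lemma lams_1: "lams 1 t = Lam t" by (simp add: lams_def)

lemma st_R:
  assumes "0 < nst M" "closed_at 0 sR" "closed_at 0 er"
  shows "(det_step ^^ 3) (apps (HR M q' b) [sR, er, Wt M]) (apps er (RCs M q' b @ [RE M q' b, sR, Wt M]))"
  using beta_n[of "[sR, er, Wt M]" 3 "apps (Var 1) (RCs M q' b @ [RE M q' b, Var 2, Var 0])" "[]"] assms
  by (simp add: HR_def sb_closed sb_map_closed)

lemma st_L:
  assumes "0 < nst M" "closed_at 0 sR" "closed_at 0 er"
  shows "(det_step ^^ 3) (apps (HL M q' b) [sR, er, Wt M]) (apps sR (LCs M q' b @ [LE M q' b, er, Wt M]))"
  using beta_n[of "[sR, er, Wt M]" 3 "apps (Var 2) (LCs M q' b @ [LE M q' b, Var 1, Var 0])" "[]"] assms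
  by (simp add: HL_def sb_closed sb_map_closed)

lemma st_RC:
  assumes "0 < nst M" "closed_at 0 sR" "closed_at 0 er"
  shows "(det_step ^^ 3) (apps (RC M q' b c) [er, sR, Wt M])
    (apps (Wt M) [Wt M, Lam (apps (Var 0) [lams (Suc (AA M)) (App (Var (AA M - b)) sR), encS M c, er, encQ M q'])])"
  using beta_n[of "[er, sR, Wt M]" 3 "apps (Var 0) [Var 0, Lam (apps (Var 0) [consv M b 2, encS M c, Var 3, encQ M q'])]" "[]"] assms
  by (simp add: RC_def consv_def sb_closed)

lemma st_RE:
  assumes "0 < nst M" "closed_at 0 sR"
  shows "(det_step ^^ 2) (apps (RE M q' b) [sR, Wt M])
    (apps (Wt M) [Wt M, Lam (apps (Var 0) [lams (Suc (AA M)) (App (Var (AA M - b)) sR), encS M (nsym M), encL M [], encQ M q'])])"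
  using beta_n[of "[sR, Wt M]" 2 "apps (Var 0) [Var 0, Lam (apps (Var 0) [consv M b 2, encS M (nsym M), encL M [], encQ M q'])]" "[]"] assms
  by (simp add: RE_def consv_def sb_closed del: enc_str.simps)

lemma st_LC:
  assumes "0 < nst M" "closed_at 0 sR" "closed_at 0 er"
  shows "(det_step ^^ 3) (apps (LC M q' b c) [sR, er, Wt M])
    (apps (Wt M) [Wt M, Lam (apps (Var 0) [sR, encS M c, lams (Suc (AA M)) (App (Var (AA M - b)) er), encQ M q'])])"
  using beta_n[of "[sR, er, Wt M]" 3 "apps (Var 0) [Var 0, Lam (apps (Var 0) [Var 3, encS M c, consv M b 2, encQ M q'])]" "[]"] assms
  by (simp add: LC_def consv_def sb_closed)

lemma st_LE:
  assumes "0 < nst M" "closed_at 0 er"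
  shows "(det_step ^^ 2) (apps (LE M q' b) [er, Wt M])
    (apps (Wt M) [Wt M, Lam (apps (Var 0) [encL M [], encS M (nsym M), lams (Suc (AA M)) (App (Var (AA M - b)) er), encQ M q'])])"
  using beta_n[of "[er, Wt M]" 2 "apps (Var 0) [Var 0, Lam (apps (Var 0) [encL M [], encS M (nsym M), consv M b 2, encQ M q'])]" "[]"] assms
  by (simp add: LE_def consv_def sb_closed del: enc_str.simps)

lemma st_G:
  assumes "0 < nst M" "q \<noteq> q_fin M" "closed_at 0 sR" "closed_at 0 ea" "closed_at 0 er"
  shows "(det_step ^^ 4) (apps (Gt M q) [sR, ea, er, Wt M]) (apps ea (Hs M q @ [sR, er, Wt M]))"
  using beta_n[of "[sR, ea, er, Wt M]" 4 "apps (Var 2) (Hs M q @ [Var 3, Var 1, Var 0])" "[]"] assms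
  by (simp add: Gt_def sb_closed sb_map_closed)

lemma st_Gfin:
  assumes "0 < nst M" "closed_at 0 sR" "closed_at 0 ea" "closed_at 0 er"
  shows "(det_step ^^ 4) (apps (Gfin M) [sR, ea, er, Wt M, k])
     (apps (Lam (App (Var 0) (Lam (apps (Var 0) [sR, ea, er, encQ M (q_fin M)])))) [k])"
  using beta_n[of "[sR, ea, er, Wt M]" 4 "Lam (App (Var 0) (Lam (apps (Var 0) [Var 5, Var 4, Var 3, encQ M (q_fin M)])))" "[k]"] assms
  by (simp add: Gfin_def sb_closed)

lemma st_F:
  assumes "0 < nst M" "closed_at 0 sR" "closed_at 0 ea" "closed_at 0 er" "closed_at 0 eq"
  shows "(det_step ^^ 5) (apps (Ft M) [sR, ea, er, eq, Wt M]) (apps eq (Gs M @ [sR, ea, er, Wt M]))"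
  using beta_n[of "[sR, ea, er, eq, Wt M]" 5 "apps (Var 1) (Gs M @ [Var 4, Var 3, Var 2, Var 0])" "[]"] assms
  by (simp add: Ft_def sb_closed sb_map_closed)

lemma st_W:
  assumes "0 < nst M" "closed_at 0 Cf"
  shows "(det_step ^^ 2) (apps (Wt M) [Wt M, Cf]) (apps Cf [Ft M, Wt M])"
  using beta_n[of "[Wt M, Cf]" 2 "apps (Var 0) [Ft M, Var 1]" "[]"] assms
  by (simp add: Wt_def sb_closed)

lemma st_C:
  assumes "0 < nst M" "closed_at 0 sR" "closed_at 0 ea" "closed_at 0 er" "closed_at 0 eq"
  shows "(det_step ^^ 1) (apps (Lam (apps (Var 0) [sR, ea, er, eq])) [Ft M, Wt M]) (apps (Ft M) [sR, ea, er, eq, Wt M])"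
  using beta_n[of "[Ft M]" 1 "apps (Var 0) [sR, ea, er, eq]" "[Wt M]"] assms
  by (simp add: lams_Suc sb_closed apps_append[symmetric])



declare relpowp.simps(2)[simp del]

lemma enc_config_eq: "enc_config M (s, a, r, q) = Lam (apps (Var 0) [encL M (rev s), encS M a, encL M r, encQ M q])"
  by (simp add: enc_config_def apps_def)

lemma wf_facts:
  assumes "wf_tm M"
  shows "0 < nst M" "delta M q a = Some (q', b, d) \<Longrightarrow> q \<noteq> q_fin M \<and> q < nst M \<and> q' < nst M \<and> b \<le> nsym M"
    "delta M (q_fin M) a = None"
proof -
  have W: "q_in M < nst M \<and> q_fin M < nst M \<and>
     (\<forall>q a. delta M q a \<noteq> None \<longleftrightarrow> (q < nst M \<and> a \<le> nsym M \<and> q \<noteq> q_fin M)) \<and>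
     (\<forall>q a q' b d. delta M q a = Some (q', b, d) \<longrightarrow> q' < nst M \<and> b \<le> nsym M)"
    using assms unfolding wf_tm_def .
  have C: "\<forall>q a. delta M q a \<noteq> None \<longleftrightarrow> (q < nst M \<and> a \<le> nsym M \<and> q \<noteq> q_fin M)"
    using conjunct1[OF conjunct2[OF conjunct2[OF W]]] .
  have D: "\<forall>q a q' b d. delta M q a = Some (q', b, d) \<longrightarrow> q' < nst M \<and> b \<le> nsym M"
    using conjunct2[OF conjunct2[OF conjunct2[OF W]]] .
  show "0 < nst M" using W by linarith
  show "delta M q a = Some (q', b, d) \<Longrightarrow> q \<noteq> q_fin M \<and> q < nst M \<and> q' < nst M \<and> b \<le> nsym M"
  proof -
    assume h: "delta M q a = Some (q', b, d)"
    then have "delta M q a \<noteq> None" by simp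
    then have "q < nst M \<and> a \<le> nsym M \<and> q \<noteq> q_fin M" using C by simp
    moreover have "q' < nst M \<and> b \<le> nsym M" using D h by blast
    ultimately show ?thesis by simp
  qed
  show "delta M (q_fin M) a = None"
    using spec[OF spec[OF C, of "q_fin M"], of a] by (cases "delta M (q_fin M) a") auto
qed

lemma pre:
  assumes "0 < nst M" "q < nst M"
  shows "(det_step ^^ (8 + nst M)) (apps (Wt M) [Wt M, enc_config M (s, a, r, q)])
           (apps (Gt M q) [encL M (rev s), encS M a, encL M r, Wt M])"
proof -
  let ?sR = "encL M (rev s)" and ?ea = "encS M a" and ?er = "encL M r" and ?eq = "encQ M q"
  let ?Cf = "Lam (apps (Var 0) [?sR, ?ea, ?er, ?eq])"
  have 1: "(det_step ^^ 2) (apps (Wt M) [Wt M, ?Cf]) (apps ?Cf [Ft M, Wt M])"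
    by (rule st_W) (use assms in simp_all)
  have 2: "(det_step ^^ 1) (apps ?Cf [Ft M, Wt M]) (apps (Ft M) [?sR, ?ea, ?er, ?eq, Wt M])"
    by (rule st_C) (use assms in simp_all)
  have 3: "(det_step ^^ 5) (apps (Ft M) [?sR, ?ea, ?er, ?eq, Wt M]) (apps ?eq (Gs M @ [?sR, ?ea, ?er, Wt M]))"
    by (rule st_F) (use assms in simp_all)
  have 4: "(det_step ^^ nst M) (apps ?eq (Gs M @ [?sR, ?ea, ?er, Wt M])) (apps (Gs M ! q) [?sR, ?ea, ?er, Wt M])"
    by (rule disp_sym) (use assms cl_Gs[OF assms(1)] in simp_all)
  have "Gs M ! q = Gt M q" using assms unfolding Gs_def by (subst nth_map) (auto simp del: upt_Suc)
  then show ?thesis using steps_trans[OF steps_trans[OF steps_trans[OF 1 2] 3] 4]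
    by (simp add: enc_config_eq)
qed

lemma mid:
  assumes "0 < nst M" "q \<noteq> q_fin M" "a \<le> nsym M" "closed_at 0 sR" "closed_at 0 er"
  shows "(det_step ^^ (4 + AA M)) (apps (Gt M q) [sR, encS M a, er, Wt M]) (apps (Ht M q a) [sR, er, Wt M])"
proof -
  have 1: "(det_step ^^ 4) (apps (Gt M q) [sR, encS M a, er, Wt M]) (apps (encS M a) (Hs M q @ [sR, er, Wt M]))"
    by (rule st_G) (use assms in simp_all)
  have 2: "(det_step ^^ AA M) (apps (encS M a) (Hs M q @ [sR, er, Wt M])) (apps (Hs M q ! a) [sR, er, Wt M])"
    by (rule disp_sym) (use assms in simp_all)
  have "Hs M q ! a = Ht M q a" using assms unfolding Hs_def by (subst nth_map) (auto simp del: upt_Suc)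
  then show ?thesis using steps_trans[OF 1 2] by simp
qed

lemma sim_step:
  assumes wf: "wf_tm M" and v: "valid_config M C" and st: "tm_step M C C'"
  shows "\<exists>j. 0 < j \<and> j \<le> 19 + nst M + 2 * AA M \<and>
    (det_step ^^ j) (apps (Wt M) [Wt M, enc_config M C]) (apps (Wt M) [Wt M, enc_config M C'])"
  using st
proof cases
  case (stay q a q' b s r)
  note d = wf_facts(2)[OF wf stay(3)]
  have n0: "0 < nst M" using wf_facts(1)[OF wf] .
  have a: "a \<le> nsym M" using v stay by (simp add: valid_config_def)
  have 1: "(det_step ^^ (8 + nst M)) (apps (Wt M) [Wt M, enc_config M C])
           (apps (Gt M q) [encL M (rev s), encS M a, encL M r, Wt M])"
    using pre[OF n0, of q s a r] d stay by simp
  have 2: "(det_step ^^ (4 + AA M)) (apps (Gt M q) [encL M (rev s), encS M a, encL M r, Wt M])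
      (apps (Ht M q a) [encL M (rev s), encL M r, Wt M])"
    by (rule mid) (use n0 d a in simp_all)
  have 3: "(det_step ^^ 3) (apps (Ht M q a) [encL M (rev s), encL M r, Wt M])
      (apps (Wt M) [Wt M, enc_config M C'])"
    using st_N[OF n0, of "encL M (rev s)" "encL M r" q' b] stay
    by (simp add: Ht_def enc_config_eq)
  show ?thesis using steps_trans[OF steps_trans[OF 1 2] 3] by (intro exI[of _ "8 + nst M + (4 + AA M) + 3"]) simp
next
  case (left q a q' b s' c r)
  note d = wf_facts(2)[OF wf left(3)]
  have n0: "0 < nst M" using wf_facts(1)[OF wf] .
  have a: "a \<le> nsym M" "c \<le> nsym M" using v left by (auto simp: valid_config_def)
  let ?sR = "encL M (c # rev s')" and ?er = "encL M r"
  have 1: "(det_step ^^ (8 + nst M)) (apps (Wt M) [Wt M, enc_config M C])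
           (apps (Gt M q) [?sR, encS M a, ?er, Wt M])"
    using pre[OF n0, of q "s' @ [c]" a r] d left by (simp del: enc_str.simps)
  have 2: "(det_step ^^ (4 + AA M)) (apps (Gt M q) [?sR, encS M a, ?er, Wt M])
      (apps (Ht M q a) [?sR, ?er, Wt M])"
    by (rule mid) (use n0 d a in simp_all)
  have 3: "(det_step ^^ 3) (apps (Ht M q a) [?sR, ?er, Wt M]) (apps ?sR (LCs M q' b @ [LE M q' b, ?er, Wt M]))"
    using st_L[OF n0, of ?sR ?er q' b] left by (simp add: Ht_def del: enc_str.simps)
  have 4: "(det_step ^^ Suc (AA M)) (apps (encL M (c # rev s')) (LCs M q' b @ LE M q' b # [?er, Wt M]))
      (apps (LCs M q' b ! c) [encL M (rev s'), ?er, Wt M])" (is "(det_step ^^ _) (apps ?hd ?args) (apps _ ?res)")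
    by (rule disp_cons) (use n0 a in \<open>simp_all add: less_Suc_eq_le del: enc_str.simps\<close>)
  have 5: "(det_step ^^ 3) (apps (LC M q' b c) [encL M (rev s'), ?er, Wt M]) (apps (Wt M) [Wt M, enc_config M C'])"
    using st_LC[OF n0, of "encL M (rev s')" ?er q' b c] left by (simp add: enc_config_eq)
  have "LCs M q' b ! c = LC M q' b c" using a unfolding LCs_def by (subst nth_map) (auto simp del: upt_Suc)
  with 4 have 4: "(det_step ^^ Suc (AA M)) (apps ?hd ?args) (apps (LC M q' b c) ?res)" by simp
  then show ?thesis using steps_trans[OF steps_trans[OF steps_trans[OF steps_trans[OF 1 2] 3] 4] 5]
    by (intro exI[of _ "8 + nst M + (4 + AA M) + 3 + Suc (AA M) + 3"]) (simp del: enc_str.simps)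
next
  case (left_end q a q' b r)
  note d = wf_facts(2)[OF wf left_end(3)]
  have n0: "0 < nst M" using wf_facts(1)[OF wf] .
  have a: "a \<le> nsym M" using v left_end by (auto simp: valid_config_def)
  let ?sR = "encL M []" and ?er = "encL M r"
  have 1: "(det_step ^^ (8 + nst M)) (apps (Wt M) [Wt M, enc_config M C])
           (apps (Gt M q) [?sR, encS M a, ?er, Wt M])"
    using pre[OF n0, of q "[]" a r] d left_end by (simp del: enc_str.simps)
  have 2: "(det_step ^^ (4 + AA M)) (apps (Gt M q) [?sR, encS M a, ?er, Wt M])
      (apps (Ht M q a) [?sR, ?er, Wt M])"
    by (rule mid) (use n0 d a in \<open>simp_all del: enc_str.simps\<close>)
  have 3: "(det_step ^^ 3) (apps (Ht M q a) [?sR, ?er, Wt M]) (apps ?sR (LCs M q' b @ [LE M q' b, ?er, Wt M]))"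
    using st_L[OF n0, of ?sR ?er q' b] left_end by (simp add: Ht_def del: enc_str.simps)
  have 4: "(det_step ^^ Suc (AA M)) (apps (encL M []) (LCs M q' b @ LE M q' b # [?er, Wt M]))
      (apps (LE M q' b) [?er, Wt M])"
    by (rule disp_nil) (use n0 a in \<open>simp_all del: enc_str.simps\<close>)
  have 5: "(det_step ^^ 2) (apps (LE M q' b) [?er, Wt M]) (apps (Wt M) [Wt M, enc_config M C'])"
    using st_LE[OF n0, of ?er q' b] left_end by (simp add: enc_config_eq blank_def)
  show ?thesis using steps_trans[OF steps_trans[OF steps_trans[OF steps_trans[OF 1 2] 3] 4] 5]
    by (intro exI[of _ "8 + nst M + (4 + AA M) + 3 + Suc (AA M) + 2"]) (simp del: enc_str.simps)
next
  case (right q a q' b s c r')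
  note d = wf_facts(2)[OF wf right(3)]
  have n0: "0 < nst M" using wf_facts(1)[OF wf] .
  have a: "a \<le> nsym M" "c \<le> nsym M" using v right by (auto simp: valid_config_def)
  let ?sR = "encL M (rev s)" and ?er = "encL M (c # r')"
  have 1: "(det_step ^^ (8 + nst M)) (apps (Wt M) [Wt M, enc_config M C])
           (apps (Gt M q) [?sR, encS M a, ?er, Wt M])"
    using pre[OF n0, of q s a "c # r'"] d right by (simp del: enc_str.simps)
  have 2: "(det_step ^^ (4 + AA M)) (apps (Gt M q) [?sR, encS M a, ?er, Wt M])
      (apps (Ht M q a) [?sR, ?er, Wt M])"
    by (rule mid) (use n0 d a in \<open>simp_all del: enc_str.simps\<close>)
  have 3: "(det_step ^^ 3) (apps (Ht M q a) [?sR, ?er, Wt M]) (apps ?er (RCs M q' b @ [RE M q' b, ?sR, Wt M]))"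
    using st_R[OF n0, of ?sR ?er q' b] right by (simp add: Ht_def del: enc_str.simps)
  have 4: "(det_step ^^ Suc (AA M)) (apps ?er (RCs M q' b @ RE M q' b # [?sR, Wt M]))
      (apps (RCs M q' b ! c) [encL M r', ?sR, Wt M])" (is "(det_step ^^ _) (apps ?hd ?args) (apps _ ?res)")
    by (rule disp_cons) (use n0 a in \<open>simp_all add: less_Suc_eq_le del: enc_str.simps\<close>)
  have 5: "(det_step ^^ 3) (apps (RC M q' b c) [encL M r', ?sR, Wt M]) (apps (Wt M) [Wt M, enc_config M C'])"
    using st_RC[OF n0, where sR="encL M (rev s)" and er="encL M r'" and q'=q' and b=b and c=c] right by (simp add: enc_config_eq)
  have "RCs M q' b ! c = RC M q' b c" using a unfolding RCs_def by (subst nth_map) (auto simp del: upt_Suc)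
  with 4 have 4: "(det_step ^^ Suc (AA M)) (apps ?hd ?args) (apps (RC M q' b c) ?res)" by simp
  then show ?thesis using steps_trans[OF steps_trans[OF steps_trans[OF steps_trans[OF 1 2] 3] 4] 5]
    by (intro exI[of _ "8 + nst M + (4 + AA M) + 3 + Suc (AA M) + 3"]) (simp del: enc_str.simps)
next
  case (right_end q a q' b s)
  note d = wf_facts(2)[OF wf right_end(3)]
  have n0: "0 < nst M" using wf_facts(1)[OF wf] .
  have a: "a \<le> nsym M" using v right_end by (auto simp: valid_config_def)
  let ?sR = "encL M (rev s)" and ?er = "encL M []"
  have 1: "(det_step ^^ (8 + nst M)) (apps (Wt M) [Wt M, enc_config M C])
           (apps (Gt M q) [?sR, encS M a, ?er, Wt M])"
    using pre[OF n0, of q s a "[]"] d right_end by (simp del: enc_str.simps)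
  have 2: "(det_step ^^ (4 + AA M)) (apps (Gt M q) [?sR, encS M a, ?er, Wt M])
      (apps (Ht M q a) [?sR, ?er, Wt M])"
    by (rule mid) (use n0 d a in \<open>simp_all del: enc_str.simps\<close>)
  have 3: "(det_step ^^ 3) (apps (Ht M q a) [?sR, ?er, Wt M]) (apps ?er (RCs M q' b @ [RE M q' b, ?sR, Wt M]))"
    using st_R[OF n0, of ?sR ?er q' b] right_end by (simp add: Ht_def del: enc_str.simps)
  have 4: "(det_step ^^ Suc (AA M)) (apps ?er (RCs M q' b @ RE M q' b # [?sR, Wt M]))
      (apps (RE M q' b) [?sR, Wt M])"
    by (rule disp_nil) (use n0 a in \<open>simp_all del: enc_str.simps\<close>)
  have 5: "(det_step ^^ 2) (apps (RE M q' b) [?sR, Wt M]) (apps (Wt M) [Wt M, enc_config M C'])"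
    using st_RE[OF n0, of ?sR q' b] right_end by (simp add: enc_config_eq blank_def)
  show ?thesis using steps_trans[OF steps_trans[OF steps_trans[OF steps_trans[OF 1 2] 3] 4] 5]
    by (intro exI[of _ "8 + nst M + (4 + AA M) + 3 + Suc (AA M) + 2"]) (simp del: enc_str.simps)
qed



lemma is_val_lams[simp]: "is_val (lams n t) = (0 < n \<or> is_val t)"
  by (cases n) (auto simp: lams_Suc)
lemma val_enc_sym[simp]: "is_val (enc_sym n i)" by (simp add: enc_sym_def)
lemma det_enc_sym[simp]: "det_term (enc_sym n i)" by (simp add: enc_sym_def)
lemma val_enc_str[simp]: "is_val (enc_str m xs)" by (cases xs) auto
lemma det_enc_str[simp]: "det_term (enc_str m xs)" by (induction xs) auto
lemma vd_consv[simp]: "is_val (consv M b j)" "det_term (consv M b j)" by (simp_all add: consv_def)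

lemma vd_HN[simp]: "is_val (HN M q' b)" "det_term (HN M q' b)" by (simp_all add: HN_def)
lemma vd_RC[simp]: "is_val (RC M q' b c)" "det_term (RC M q' b c)" by (simp_all add: RC_def)
lemma vd_RE[simp]: "is_val (RE M q' b)" "det_term (RE M q' b)" by (simp_all add: RE_def)
lemma vd_RCs[simp]: "\<forall>x\<in>set (RCs M q' b). is_val x \<and> det_term x" by (simp add: RCs_def)
lemma vd_HR[simp]: "is_val (HR M q' b)" "det_term (HR M q' b)" by (simp_all add: HR_def)
lemma vd_LC[simp]: "is_val (LC M q' b c)" "det_term (LC M q' b c)" by (simp_all add: LC_def)
lemma vd_LE[simp]: "is_val (LE M q' b)" "det_term (LE M q' b)" by (simp_all add: LE_def)
lemma vd_LCs[simp]: "\<forall>x\<in>set (LCs M q' b). is_val x \<and> det_term x" by (simp add: LCs_def)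
lemma vd_HL[simp]: "is_val (HL M q' b)" "det_term (HL M q' b)" by (simp_all add: HL_def)
lemma vd_Ht[simp]: "is_val (Ht M q a) \<and> det_term (Ht M q a)"
  by (auto simp: Ht_def split: option.split dir.split)
lemma vd_Hs[simp]: "\<forall>x\<in>set (Hs M q). is_val x \<and> det_term x" by (simp add: Hs_def)
lemma vd_Gfin[simp]: "is_val (Gfin M)" "det_term (Gfin M)" by (simp_all add: Gfin_def)
lemma vd_Gt[simp]: "is_val (Gt M q) \<and> det_term (Gt M q)" by (simp add: Gt_def)
lemma vd_Gs[simp]: "\<forall>x\<in>set (Gs M). is_val x \<and> det_term x" by (simp add: Gs_def)
lemma vd_Ft[simp]: "is_val (Ft M)" "det_term (Ft M)" by (simp_all add: Ft_def)
lemma vd_Wt[simp]: "is_val (Wt M)" "det_term (Wt M)" by (simp_all add: Wt_def)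

lemma wf_defined:
  assumes "wf_tm M" "q < nst M" "a \<le> nsym M" "q \<noteq> q_fin M"
  shows "\<exists>q' b d. delta M q a = Some (q', b, d)"
proof -
  have W: "q_in M < nst M \<and> q_fin M < nst M \<and>
     (\<forall>q a. delta M q a \<noteq> None \<longleftrightarrow> (q < nst M \<and> a \<le> nsym M \<and> q \<noteq> q_fin M)) \<and>
     (\<forall>q a q' b d. delta M q a = Some (q', b, d) \<longrightarrow> q' < nst M \<and> b \<le> nsym M)"
    using assms(1) unfolding wf_tm_def .
  have C: "\<forall>q a. delta M q a \<noteq> None \<longleftrightarrow> (q < nst M \<and> a \<le> nsym M \<and> q \<noteq> q_fin M)"
    using conjunct1[OF conjunct2[OF conjunct2[OF W]]] .
  have "delta M q a \<noteq> None" using spec[OF spec[OF C, of q], of a] assms by simp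
  then show ?thesis by (cases "delta M q a") auto
qed

lemma valid_step:
  assumes wf: "wf_tm M" and v: "valid_config M C" and st: "tm_step M C C'"
  shows "valid_config M C'"
  using st v by (cases rule: tm_step.cases) (auto simp: valid_config_def blank_def dest!: wf_facts(2)[OF wf])

lemma final_nostep:
  assumes wf: "wf_tm M" and f: "final M C"
  shows "\<not> tm_step M C C'"
proof
  assume "tm_step M C C'"
  then show False using f wf_facts(3)[OF wf] by (cases rule: tm_step.cases) (auto simp: final_def)
qed

lemma progress:
  assumes wf: "wf_tm M" and v: "valid_config M C" and nf: "\<not> final M C"
  shows "\<exists>C'. tm_step M C C'"
proof -
  obtain s a r q where C: "C = (s, a, r, q)" by (cases C) auto
  have "q < nst M" "a \<le> nsym M" "q \<noteq> q_fin M" using v nf C by (auto simp: valid_config_def final_def)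
  then obtain q' b d where d: "delta M q a = Some (q', b, d)" using wf_defined[OF wf] by blast
  show ?thesis
  proof (cases d)
    case N then show ?thesis using d C tm_step.stay by blast
  next
    case L
    show ?thesis
    proof (cases s rule: rev_cases)
      case Nil then show ?thesis using d C L tm_step.left_end by blast
    next
      case (snoc s' c) then show ?thesis using d C L tm_step.left by blast
    qed
  next
    case R
    show ?thesis
    proof (cases r)
      case Nil then show ?thesis using d C R tm_step.right_end by blast
    next
      case (Cons c r') then show ?thesis using d C R tm_step.right by blast
    qed
  qed
qed

lemma lift_k:
  assumes "(det_step ^^ j) (apps (Wt M) [Wt M, Cf]) (apps (Wt M) [Wt M, Cf'])"
  shows "(det_step ^^ j) (apps (Wt M) [Wt M, Cf, k]) (apps (Wt M) [Wt M, Cf', k])"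
  using steps_apps[OF assms, of "[k]"] by (simp add: apps_append[symmetric])

lemma final_run:
  assumes wf: "wf_tm M" and v: "valid_config M D" and f: "final M D"
  shows "(det_step ^^ (13 + nst M)) (apps (Wt M) [Wt M, enc_config M D, k]) (App k (enc_config M D))"
proof -
  obtain s a r q where D: "D = (s, a, r, q)" by (cases D) auto
  have q: "q = q_fin M" using f D by (simp add: final_def)
  have n0: "0 < nst M" using wf_facts(1)[OF wf] .
  have qn: "q < nst M" using v D by (simp add: valid_config_def)
  let ?sR = "encL M (rev s)" and ?ea = "encS M a" and ?er = "encL M r"
  let ?Dl = "Lam (apps (Var 0) [?sR, ?ea, ?er, encQ M (q_fin M)])"
  have 1: "(det_step ^^ (8 + nst M)) (apps (Wt M) [Wt M, enc_config M D, k]) (apps (Gfin M) [?sR, ?ea, ?er, Wt M, k])"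
    using steps_apps[OF pre[OF n0 qn, of s a r], of "[k]"] D q by (simp add: apps_append[symmetric] Gt_def)
  have 2: "(det_step ^^ 4) (apps (Gfin M) [?sR, ?ea, ?er, Wt M, k]) (apps (Lam (App (Var 0) ?Dl)) [k])"
    by (rule st_Gfin) (use n0 in simp_all)
  have "det_step (App (Lam (App (Var 0) ?Dl)) k) (subst (App (Var 0) ?Dl) 0 k)"
    by (rule det_step.beta)
  moreover have "subst (App (Var 0) ?Dl) 0 k = App k ?Dl"
    using subst_closed[of 0 ?Dl 0 k] n0 by simp
  ultimately have 3: "(det_step ^^ 1) (apps (Lam (App (Var 0) ?Dl)) [k]) (App k (enc_config M D))"
    using D q by (simp add: enc_config_eq apps_Cons)
  show ?thesis using steps_trans[OF steps_trans[OF 1 2] 3] by simp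
qed

lemma run:
  assumes wf: "wf_tm M"
  shows "(tm_step M ^^ n) C D \<Longrightarrow> valid_config M C \<Longrightarrow> final M D \<Longrightarrow>
    \<exists>m \<le> (21 + nst M + 2 * AA M) * n + (13 + nst M).
      (det_step ^^ m) (apps (Wt M) [Wt M, enc_config M C, k]) (App k (enc_config M D))"
proof (induction n arbitrary: C)
  case 0
  then have CD: "C = D" by simp
  have "(det_step ^^ (13 + nst M)) (apps (Wt M) [Wt M, enc_config M C, k]) (App k (enc_config M D))"
    using final_run[OF wf, of D k] 0 CD by simp
  then show ?case by (intro exI[of _ "13 + nst M"]) simp
next
  case (Suc n)
  obtain C' where s: "tm_step M C C'" and r: "(tm_step M ^^ n) C' D"
    using Suc.prems(1) by (rule relpowp_Suc_E2)
  have v': "valid_config M C'" using valid_step[OF wf Suc.prems(2) s] .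
  obtain m where m: "m \<le> (21 + nst M + 2 * AA M) * n + (13 + nst M)"
    "(det_step ^^ m) (apps (Wt M) [Wt M, enc_config M C', k]) (App k (enc_config M D))"
    using Suc.IH[OF r v' Suc.prems(3)] by blast
  obtain j where j: "j \<le> 19 + nst M + 2 * AA M"
    "(det_step ^^ j) (apps (Wt M) [Wt M, enc_config M C]) (apps (Wt M) [Wt M, enc_config M C'])"
    using sim_step[OF wf Suc.prems(2) s] by blast
  have "(det_step ^^ (j + m)) (apps (Wt M) [Wt M, enc_config M C, k]) (App k (enc_config M D))"
    using steps_trans[OF lift_k[OF j(2)] m(2)] .
  moreover have "j + m \<le> (21 + nst M + 2 * AA M) * Suc n + (13 + nst M)"
    using j(1) m(1) by simp
  ultimately show ?case by blast
qed

definition Pd :: "tm \<Rightarrow> trm \<Rightarrow> trm \<Rightarrow> bool" where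
  "Pd M k t = (\<exists>j C. (det_step ^^ j) t (apps (Wt M) [Wt M, enc_config M C, k]) \<and> valid_config M C \<and>
      \<not> (\<exists>n D. (tm_step M ^^ n) C D \<and> final M D))"

lemma Pd_step:
  assumes wf: "wf_tm M" and P: "Pd M k t"
  shows "\<exists>t'. det_step t t' \<and> Pd M k t'"
proof -
  obtain j C where j: "(det_step ^^ j) t (apps (Wt M) [Wt M, enc_config M C, k])" and v: "valid_config M C"
    and nf: "\<not> (\<exists>n D. (tm_step M ^^ n) C D \<and> final M D)"
    using P unfolding Pd_def by blast
  show ?thesis
  proof (cases j)
    case (Suc j')
    from j Suc have "(det_step ^^ Suc j') t (apps (Wt M) [Wt M, enc_config M C, k])" by simp
    then obtain t' where t': "det_step t t'" "(det_step ^^ j') t' (apps (Wt M) [Wt M, enc_config M C, k])"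
      by (rule relpowp_Suc_E2)
    have "Pd M k t'" unfolding Pd_def using t'(2) v nf by blast
    then show ?thesis using t'(1) by blast
  next
    case 0
    then have t: "t = apps (Wt M) [Wt M, enc_config M C, k]" using j by simp
    have "\<not> final M C" using nf relpowp_0_I[of "tm_step M" C] by blast
    then obtain C' where s: "tm_step M C C'" using progress[OF wf v] by blast
    have v': "valid_config M C'" using valid_step[OF wf v s] .
    have nf': "\<not> (\<exists>n D. (tm_step M ^^ n) C' D \<and> final M D)"
    proof
      assume "\<exists>n D. (tm_step M ^^ n) C' D \<and> final M D"
      then obtain n D where nD: "(tm_step M ^^ n) C' D" "final M D" by blast
      have "(tm_step M ^^ Suc n) C D" using relpowp_Suc_I2[of "tm_step M", OF s nD(1)] .
      then show False using nf nD(2) by blast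
    qed
    obtain i where i: "0 < i"
      "(det_step ^^ i) (apps (Wt M) [Wt M, enc_config M C]) (apps (Wt M) [Wt M, enc_config M C'])"
      using sim_step[OF wf v s] by blast
    then obtain i' where i': "i = Suc i'" by (cases i) auto
    have "(det_step ^^ Suc i') t (apps (Wt M) [Wt M, enc_config M C', k])"
      using lift_k[OF i(2)] t i' by simp
    then obtain t' where t': "det_step t t'" "(det_step ^^ i') t' (apps (Wt M) [Wt M, enc_config M C', k])"
      by (rule relpowp_Suc_E2)
    have "Pd M k t'" unfolding Pd_def using t'(2) v' nf' by blast
    then show ?thesis using t'(1) by blast
  qed
qed

lemma Pd_diverges:
  assumes wf: "wf_tm M" and P: "Pd M k t"
  shows "diverges t"
proof -
  define f where "f = rec_nat t (\<lambda>_ x. SOME y. det_step x y \<and> Pd M k y)"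
  have f0: "f 0 = t" by (simp add: f_def)
  have fS: "f (Suc i) = (SOME y. det_step (f i) y \<and> Pd M k y)" for i by (simp add: f_def)
  have Pf: "Pd M k (f i)" for i
  proof (induction i)
    case 0 then show ?case using P f0 by simp
  next
    case (Suc i)
    show ?case unfolding fS using someI_ex[OF Pd_step[OF wf Suc.IH]] by blast
  qed
  have "det_step (f i) (f (Suc i))" for i
    unfolding fS using someI_ex[OF Pd_step[OF wf Pf[of i]]] by blast
  then show ?thesis unfolding diverges_def using f0 by blast
qed

lemma init_steps:
  assumes n0: "0 < nst M" and cc: "closed_at 0 Cf"
  shows "(det_step ^^ 2) (App (App (transT M) k) Cf) (apps (Wt M) [Wt M, Cf, k])"
proof -
  have sW: "subst (Wt M) d s = Wt M" for d s using subst_closed[of 0 "Wt M" d s] n0 by simp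
  let ?X = "App (App (App (Wt M) (Wt M)) (Var 0)) (lift k 0)"
  have "det_step (App (transT M) k) (subst (Lam (App (App (App (Wt M) (Wt M)) (Var 0)) (Var 1))) 0 k)"
    unfolding transT_def by (rule det_step.beta)
  moreover have "subst (Lam (App (App (App (Wt M) (Wt M)) (Var 0)) (Var 1))) 0 k = Lam ?X"
    using sW by simp
  ultimately have a: "det_step (App (App (transT M) k) Cf) (App (Lam ?X) Cf)"
    by (simp add: det_step.ctx)
  have b: "det_step (App (Lam ?X) Cf) (subst ?X 0 Cf)" by (rule det_step.beta)
  have "subst ?X 0 Cf = apps (Wt M) [Wt M, Cf, k]"
    using sW subst_lift[of k 0 Cf] by (simp add: apps_def)
  then have b': "det_step (App (Lam ?X) Cf) (apps (Wt M) [Wt M, Cf, k])" using b by simp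
  have "(det_step ^^ Suc (Suc 0)) (App (App (transT M) k) Cf) (apps (Wt M) [Wt M, Cf, k])"
    using relpowp_Suc_I2[of det_step, OF a relpowp_Suc_I2[of det_step, OF b' relpowp_0_I[of det_step]]] .
  then show ?thesis by (simp add: numeral_2_eq_2)
qed

lemma cl_enc_config: "0 < nst M \<Longrightarrow> closed_at 0 (enc_config M C)"
  by (cases C) (simp add: enc_config_eq)

theorem mainTheorem8:
  fixes M :: tm
  assumes "wf_tm M"
  shows "\<exists>trans (c::nat). closed trans \<and> det_term trans \<and>
    (\<forall>k C. is_val k \<and> det_term k \<and> valid_config M C \<longrightarrow>
      (\<forall>n D. (tm_step M ^^ n) C D \<and> final M D \<longrightarrow>
         (\<exists>m \<le> c * (n + 1). (det_step ^^ m) (App (App trans k) (enc_config M C)) (App k (enc_config M D)))) \<and>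
      ((\<nexists>n D. (tm_step M ^^ n) C D \<and> final M D) \<longrightarrow>
         diverges (App (App trans k) (enc_config M C))))"
proof -
  have n0: "0 < nst M" using wf_facts(1)[OF assms] .
  have P1: "closed (transT M)" using n0 by (simp add: closed_def transT_def)
  have P2: "det_term (transT M)" by (simp add: transT_def)
  have P3: "(\<forall>n D. (tm_step M ^^ n) C D \<and> final M D \<longrightarrow>
         (\<exists>m \<le> (21 + nst M + 2 * AA M) * (n + 1). (det_step ^^ m) (App (App (transT M) k) (enc_config M C)) (App k (enc_config M D)))) \<and>
      ((\<nexists>n D. (tm_step M ^^ n) C D \<and> final M D) \<longrightarrow>
         diverges (App (App (transT M) k) (enc_config M C)))"
    if kc: "is_val k \<and> det_term k \<and> valid_config M C" for k C
  proof (intro conjI allI impI)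
    have init: "(det_step ^^ 2) (App (App (transT M) k) (enc_config M C)) (apps (Wt M) [Wt M, enc_config M C, k])"
      using init_steps[OF n0 cl_enc_config[OF n0]] .
    fix n D
    assume nd: "(tm_step M ^^ n) C D \<and> final M D"
    obtain m where m: "m \<le> (21 + nst M + 2 * AA M) * n + (13 + nst M)"
      "(det_step ^^ m) (apps (Wt M) [Wt M, enc_config M C, k]) (App k (enc_config M D))"
      using run[OF assms, of n C D k] nd kc by blast
    have "(det_step ^^ (2 + m)) (App (App (transT M) k) (enc_config M C)) (App k (enc_config M D))"
      using steps_trans[OF init m(2)] .
    moreover have "2 + m \<le> (21 + nst M + 2 * AA M) * (n + 1)" using m(1) by simp
    ultimately show "\<exists>m \<le> (21 + nst M + 2 * AA M) * (n + 1). (det_step ^^ m) (App (App (transT M) k) (enc_config M C)) (App k (enc_config M D))"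
      by blast
  next
    have init: "(det_step ^^ 2) (App (App (transT M) k) (enc_config M C)) (apps (Wt M) [Wt M, enc_config M C, k])"
      using init_steps[OF n0 cl_enc_config[OF n0]] .
    assume nr: "\<nexists>n D. (tm_step M ^^ n) C D \<and> final M D"
    have "Pd M k (App (App (transT M) k) (enc_config M C))"
      unfolding Pd_def using init kc nr by blast
    then show "diverges (App (App (transT M) k) (enc_config M C))"
      using Pd_diverges[OF assms] by blast
  qed
  show ?thesis
    by (rule exI[of _ "transT M"], rule exI[of _ "21 + nst M + 2 * AA M"]) (use P1 P2 P3 in blast)
qed


end
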